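(* For every $n\ge1$, if $T\in\mathcal{T}_n$ satisfies $\mathcal{C}(T)=c_n$, then $\mathcal{S}(T)=\min\{\mathcal{S}(T'):T'\in\mathcal{T}_n\}$.
   Context: Bifurcating trees: rooted trees in which every internal node has exactly two children, considered up to isomorphism; $\mathcal{T}_n$ is the set of such trees with $n$ leaves. For a node $w$, $\kappa_T(w)$ is its number of descendant leaves. The Colless index is $\mathcal{C}(T)=\sum_{v}|\kappa_T(v_1)-\kappa_T(v_2)|$, summed over internal nodes $v$ with children $v_1,v_2$; $c_n=\min\{\mathcal{C}(T):T\in\mathcal{T}_n\}$. The Sackin index is $\mathcal{S}(T)=\sum_{x}\delta_T(x)$, the sum over leaves $x$ of their depth (number of edges from the root), equivalently $\sum_{v}\kappa_T(v)$ over internal nodes $v$. *)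

theory Defs
  imports Main
begin

text \<open>Trees are represented as ordered
  trees; Colless and Sackin indices are invariant under swapping children,
  so minima over ordered trees coincide with minima over isomorphism classes.\<close>
datatype btree = Leaf | Node btree btree

fun leaves :: "btree \<Rightarrow> nat" where
  "leaves Leaf = 1"
| "leaves (Node l r) = leaves l + leaves r"

fun colless :: "btree \<Rightarrow> nat" where
  "colless Leaf = 0"
| "colless (Node l r) = colless l + colless r
      + (if leaves l \<ge> leaves r then leaves l - leaves r else leaves r - leaves l)"

fun sackin :: "btree \<Rightarrow> nat" where
  "sackin Leaf = 0"
| "sackin (Node l r) = sackin l + sackin r + leaves l + leaves r"

definition trees :: "nat \<Rightarrow> btree set" where
  "trees n = {t. leaves t = n}"

definition min_colless :: "nat \<Rightarrow> nat" where
  "min_colless n = Min (colless ` trees n)"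

end

theory Submission imports Defs begin
fun bal :: "nat \<Rightarrow> btree" where
 "bal n = (if n \<le> 1 then Leaf else Node (bal ((n+1) div 2)) (bal (n div 2)))"
declare bal.simps[simp del]
lemma leaves_bal: "n \<ge> 1 \<Longrightarrow> leaves (bal n) = n"
  by (induction n rule: bal.induct) (subst bal.simps, auto)
definition cb where "cb n = colless (bal n)"
definition sb where "sb n = sackin (bal n)"
lemma cb_even: "m \<ge> 1 \<Longrightarrow> cb (2*m) = 2 * cb m"
  unfolding cb_def by (subst bal.simps) (auto simp: leaves_bal)
lemma cb_odd: "m \<ge> 1 \<Longrightarrow> cb (2*m+1) = cb (m+1) + cb m + 1"
  unfolding cb_def by (subst bal.simps) (auto simp: leaves_bal)
lemma sb_even: "m \<ge> 1 \<Longrightarrow> sb (2*m) = 2 * sb m + 2*m"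
  unfolding sb_def by (subst bal.simps) (auto simp: leaves_bal)
lemma sb_odd: "m \<ge> 1 \<Longrightarrow> sb (2*m+1) = sb (m+1) + sb m + 2*m+1"
  unfolding sb_def by (subst bal.simps) (auto simp: leaves_bal)
lemma cb1': "cb 1 = 0" "sb 1 = 0" by (simp_all add: cb_def sb_def bal.simps)

definition pw :: "nat \<Rightarrow> nat \<Rightarrow> bool" where
  "pw a b \<longleftrightarrow> (\<exists>k. (a < 2^k \<and> 2^k < b) \<or> (b < 2^k \<and> 2^k < a))"

lemma pw_sym: "pw a b = pw b a" unfolding pw_def by blast

lemma pw_half: assumes "pw a b" "1 \<le> a" "1 \<le> b"
  shows "pw (a div 2) ((b+1) div 2) \<or> pw (b div 2) ((a+1) div 2)"
proof -
  obtain k where k: "(a < 2^k \<and> 2^k < b) \<or> (b < 2^k \<and> 2^k < a)" using assms unfolding pw_def by blast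
  have "k \<noteq> 0" proof assume "k = 0" then show False using k assms by auto qed
  then obtain j where j: "k = Suc j" by (cases k) auto
  have "(a div 2 < 2^j \<and> 2^j < (b+1) div 2) \<or> (b div 2 < 2^j \<and> 2^j < (a+1) div 2)"
    using k unfolding j by auto
  then show ?thesis unfolding pw_def by blast
qed

lemma pw_double: assumes "x < q" "q < y" "a \<le> 2*x+1" "2*y \<le> b + 1" "q = 2^j"
  shows "pw a b"
proof -
  have "a < 2^(Suc j) \<and> 2^(Suc j) < b" using assms by auto
  then show ?thesis unfolding pw_def by blast
qed

lemma pw_double': assumes "pw x y" "a \<le> 2*x+1" "2*y \<le> b + 1" "b \<le> 2*y+1" "2*x \<le> a + 1"
  shows "pw a b"
proof -
  obtain k where k: "(x < 2^k \<and> 2^k < y) \<or> (y < 2^k \<and> 2^k < x)" using assms unfolding pw_def by blast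
  then show ?thesis
  proof
    assume "x < 2^k \<and> 2^k < y" then show ?thesis using pw_double[of x "2^k" y a b k] assms by auto
  next
    assume h: "y < 2^k \<and> 2^k < x"
    have "b < 2^(Suc k) \<and> 2^(Suc k) < a" using h assms by auto
    then show ?thesis unfolding pw_def by blast
  qed
qed
definition Qc :: "nat \<Rightarrow> nat \<Rightarrow> bool" where
 "Qc a b \<longleftrightarrow> int (cb (a+b)) \<le> int (cb a) + int (cb b) + \<bar>int a - int b\<bar> \<and>
    (pw a b \<longrightarrow> int (cb (a+b)) < int (cb a) + int (cb b) + \<bar>int a - int b\<bar>)"

lemma Qc_sym: "Qc a b = Qc b a"
  unfolding Qc_def using pw_sym[of a b] by (simp add: add.commute abs_minus_commute)

lemma pw_1_2: "\<not> pw 1 2" unfolding pw_def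
  by (metis One_nat_def Suc_1 Suc_lessD less_2_cases_iff less_Suc_eq_0_disj nat_power_less_imp_less
      not_less_eq one_less_power power_0 power_one_right zero_less_Suc)

lemma pw_refl: "\<not> pw a a" unfolding pw_def by auto

lemma colless_split: "\<forall>a b. a+b = n \<longrightarrow> 1 \<le> a \<longrightarrow> 1 \<le> b \<longrightarrow> Qc a b"
proof (induction n rule: less_induct)
  case (less n)
  have IH: "\<And>a b. a + b < n \<Longrightarrow> 1 \<le> a \<Longrightarrow> 1 \<le> b \<Longrightarrow> Qc a b" using less by blast
  have ord: "Qc a b" if ab: "a+b = n" "1 \<le> a" "a \<le> b" for a b
  proof -
    obtain b' where b': "b = 2*b' \<or> b = 2*b'+1" by (metis odd_two_times_div_two_succ even_two_times_div_two)
    obtain a' where a': "a = 2*a' \<or> a = 2*a'+1" by (metis odd_two_times_div_two_succ even_two_times_div_two)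
    show ?thesis
    proof (cases "a = 1")
      case a1: True
      show ?thesis
      proof (cases "b = 1")
        case True
        have "cb 2 = 0" using cb_even[of 1] cb1' by simp
        then show ?thesis using a1 True pw_refl cb1' unfolding Qc_def by (simp add: numeral_2_eq_2)
      next
        case False
        then have "b' \<ge> 1" using b' ab a1 by auto
        have q: "Qc 1 b'" using IH[of 1 b'] ab a1 b' \<open>b' \<ge> 1\<close> by auto
        from b' show ?thesis
        proof
          assume bb: "b = 2*b'"
          have e1: "cb (a+b) = cb (b'+1) + cb b' + 1" using cb_odd[of b'] \<open>b' \<ge> 1\<close> a1 bb by (simp add: add.commute)
          have e2: "cb b = 2 * cb b'" using cb_even[of b'] \<open>b' \<ge> 1\<close> bb by simp
          have pwb: "pw a b \<Longrightarrow> b' \<ge> 2" using pw_1_2 a1 bb \<open>b' \<ge> 1\<close>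
            by (metis One_nat_def Suc_1 Suc_le_eq le_neq_implies_less nat_mult_1_right)
          show ?thesis using q e1 e2 pwb a1 bb \<open>b' \<ge> 1\<close> unfolding Qc_def by (auto simp: cb1')
        next
          assume bb: "b = 2*b'+1"
          have e1: "cb (a+b) = 2 * cb (b'+1)" using cb_even[of "b'+1"] a1 bb by (simp add: add.commute)
          have e2: "cb b = cb (b'+1) + cb b' + 1" using cb_odd[of b'] \<open>b' \<ge> 1\<close> bb by simp
          show ?thesis using q e1 e2 a1 bb \<open>b' \<ge> 1\<close> unfolding Qc_def by (auto simp: cb1')
        qed
      qed
    next
      case False
      then have "a \<ge> 2" using ab by auto
      then have "a' \<ge> 1" "b' \<ge> 1" using a' b' ab by auto
      have ph: "pw a b \<Longrightarrow> pw (a div 2) ((b+1) div 2) \<or> pw (b div 2) ((a+1) div 2)"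
        using pw_half ab by auto
      consider "a = 2*a'" "b = 2*b'" | "a = 2*a'+1" "b = 2*b'+1" | "a = 2*a'+1" "b = 2*b'"
        | "a = 2*a'" "b = 2*b'+1" using a' b' by blast
      then show ?thesis
      proof cases
        case 1
        have q: "Qc a' b'" using IH[of a' b'] 1 ab \<open>a' \<ge> 1\<close> \<open>b' \<ge> 1\<close> by auto
        have e0: "cb (a+b) = 2 * cb (a'+b')" using cb_even[of "a'+b'"] 1 \<open>a' \<ge> 1\<close>
          by (simp add: distrib_left)
        have e1: "cb a = 2 * cb a'" "cb b = 2 * cb b'" using cb_even \<open>a' \<ge> 1\<close> \<open>b' \<ge> 1\<close> 1 by auto
        have p: "pw a b \<Longrightarrow> pw a' b'" using ph 1 pw_sym by auto
        have ab': "\<bar>int a - int b\<bar> = 2 * \<bar>int a' - int b'\<bar>" using 1 by arith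
        show ?thesis using q e0 e1 p ab' unfolding Qc_def by auto
      next
        case 2
        have q1: "Qc (a'+1) b'" using IH[of "a'+1" b'] 2 ab \<open>a' \<ge> 1\<close> \<open>b' \<ge> 1\<close> by auto
        have q2: "Qc a' (b'+1)" using IH[of a' "b'+1"] 2 ab \<open>a' \<ge> 1\<close> \<open>b' \<ge> 1\<close> by auto
        have e0: "cb (a+b) = 2 * cb (a'+b'+1)" using cb_even[of "a'+b'+1"] 2 
          by (simp add: distrib_left)
        have e1: "cb a = cb (a'+1) + cb a' + 1" "cb b = cb (b'+1) + cb b' + 1"
          using cb_odd \<open>a' \<ge> 1\<close> \<open>b' \<ge> 1\<close> 2 by auto
        have p: "pw a b \<Longrightarrow> a' < b'" proof - assume "pw a b" then have "a \<noteq> b" using pw_refl by auto then show ?thesis using 2 ab by auto qed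
        show ?thesis using q1 q2 e0 e1 p 2 ab unfolding Qc_def by (auto simp: abs_if split: if_splits)
      next
        case 3
        have q1: "Qc (a'+1) b'" using IH[of "a'+1" b'] 3 ab \<open>a' \<ge> 1\<close> \<open>b' \<ge> 1\<close> by auto
        have q2: "Qc a' b'" using IH[of a' b'] 3 ab \<open>a' \<ge> 1\<close> \<open>b' \<ge> 1\<close> by auto
        have e0: "cb (a+b) = cb (a'+b'+1) + cb (a'+b') + 1" using cb_odd[of "a'+b'"] 3 \<open>a' \<ge> 1\<close>
          by (simp add: algebra_simps)
        have e1: "cb a = cb (a'+1) + cb a' + 1" "cb b = 2 * cb b'"
          using cb_odd cb_even \<open>a' \<ge> 1\<close> \<open>b' \<ge> 1\<close> 3 by auto
        have p: "pw a b \<Longrightarrow> pw a' b' \<or> pw (a'+1) b'" using ph 3 pw_sym by auto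
        have ab': "\<bar>int a - int b\<bar> = \<bar>int (a'+1) - int b'\<bar> + \<bar>int a' - int b'\<bar>" using 3 by arith
        have s: "a'+1+b' = a'+b'+1" by simp
        show ?thesis using q1 q2 e0 e1 p ab' unfolding Qc_def s by auto
      next
        case 4
        have q1: "Qc a' (b'+1)" using IH[of a' "b'+1"] 4 ab \<open>a' \<ge> 1\<close> \<open>b' \<ge> 1\<close> by auto
        have q2: "Qc a' b'" using IH[of a' b'] 4 ab \<open>a' \<ge> 1\<close> \<open>b' \<ge> 1\<close> by auto
        have e0: "cb (a+b) = cb (a'+b'+1) + cb (a'+b') + 1" using cb_odd[of "a'+b'"] 4 \<open>a' \<ge> 1\<close>
          by (simp add: algebra_simps)
        have e1: "cb b = cb (b'+1) + cb b' + 1" "cb a = 2 * cb a'"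
          using cb_odd cb_even \<open>a' \<ge> 1\<close> \<open>b' \<ge> 1\<close> 4 by auto
        have p: "pw a b \<Longrightarrow> pw a' b' \<or> pw a' (b'+1)" using ph 4 pw_sym by auto
        have ab': "\<bar>int a - int b\<bar> = \<bar>int a' - int (b'+1)\<bar> + \<bar>int a' - int b'\<bar>" using 4 by arith
        have s: "a'+(b'+1) = a'+b'+1" by simp
        show ?thesis using q1 q2 e0 e1 p ab' unfolding Qc_def s by auto
      qed
    qed
  qed
  show ?case
  proof (intro allI impI)
    fix a b assume "a + b = n" "1 \<le> a" "1 \<le> b"
    then show "Qc a b" using ord[of a b] ord[of b a] Qc_sym[of a b] by (cases "a \<le> b") (auto simp: add.commute)
  qed
qed
definition Rs :: "nat \<Rightarrow> nat \<Rightarrow> bool" where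
 "Rs a b \<longleftrightarrow> sb (a+b) \<le> sb a + sb b + a + b \<and>
    (\<not> pw a b \<longrightarrow> sb (a+b) = sb a + sb b + a + b)"

lemma Rs_sym: "Rs a b = Rs b a"
  unfolding Rs_def using pw_sym[of a b] by (simp add: add.commute add.left_commute)

lemma pw_1_3: "b \<ge> 3 \<Longrightarrow> pw 1 b" unfolding pw_def
  by (rule exI[of _ 1]) auto

lemma sackin_split: "\<forall>a b. a+b = n \<longrightarrow> 1 \<le> a \<longrightarrow> 1 \<le> b \<longrightarrow> Rs a b"
proof (induction n rule: less_induct)
  case (less n)
  have IH: "\<And>a b. a + b < n \<Longrightarrow> 1 \<le> a \<Longrightarrow> 1 \<le> b \<Longrightarrow> Rs a b" using less by blast
  have ord: "Rs a b" if ab: "a+b = n" "1 \<le> a" "a \<le> b" for a b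
  proof -
    obtain b' where b': "b = 2*b' \<or> b = 2*b'+1" by (metis odd_two_times_div_two_succ even_two_times_div_two)
    obtain a' where a': "a = 2*a' \<or> a = 2*a'+1" by (metis odd_two_times_div_two_succ even_two_times_div_two)
    have s2: "sb 2 = 2" using sb_even[of 1] cb1' by simp
    show ?thesis
    proof (cases "a = 1")
      case a1: True
      show ?thesis
      proof (cases "b = 1")
        case True
        then show ?thesis using a1 s2 cb1' unfolding Rs_def by (simp add: numeral_2_eq_2)
      next
        case False
        then have "b' \<ge> 1" using b' ab a1 by auto
        have q: "Rs 1 b'" using IH[of 1 b'] ab a1 b' \<open>b' \<ge> 1\<close> by auto
        from b' show ?thesis
        proof
          assume bb: "b = 2*b'"
          have e1: "sb (a+b) = sb (b'+1) + sb b' + 2*b'+1" using sb_odd[of b'] \<open>b' \<ge> 1\<close> a1 bb by (simp add: add.commute)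
          have e2: "sb b = 2 * sb b' + 2*b'" using sb_even[of b'] \<open>b' \<ge> 1\<close> bb by simp
          have pwb: "\<not> pw a b \<Longrightarrow> b' = 1" proof - assume "\<not> pw a b" then have "\<not> 3 \<le> b" using pw_1_3[of b] a1 by auto then show ?thesis using bb \<open>b' \<ge> 1\<close> by linarith qed
          have "\<not> pw 1 1" using pw_refl by auto
          then show ?thesis using q e1 e2 pwb a1 bb \<open>b' \<ge> 1\<close> s2 cb1' unfolding Rs_def by auto
        next
          assume bb: "b = 2*b'+1"
          have e1: "sb (a+b) = 2 * sb (b'+1) + 2*b'+2" using sb_even[of "b'+1"] a1 bb by (simp add: add.commute)
          have e2: "sb b = sb (b'+1) + sb b' + 2*b'+1" using sb_odd[of b'] \<open>b' \<ge> 1\<close> bb by simp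
          have "pw a b" using pw_1_3[of b] a1 bb \<open>b' \<ge> 1\<close> by auto
          then show ?thesis using q e1 e2 a1 bb \<open>b' \<ge> 1\<close> cb1' unfolding Rs_def by auto
        qed
      qed
    next
      case False
      then have "a \<ge> 2" using ab by auto
      then have "a' \<ge> 1" "b' \<ge> 1" using a' b' ab by auto
      consider "a = 2*a'" "b = 2*b'" | "a = 2*a'+1" "b = 2*b'+1" | "a = 2*a'+1" "b = 2*b'"
        | "a = 2*a'" "b = 2*b'+1" using a' b' by blast
      then show ?thesis
      proof cases
        case 1
        have q: "Rs a' b'" using IH[of a' b'] 1 ab \<open>a' \<ge> 1\<close> \<open>b' \<ge> 1\<close> by auto
        have e0: "sb (a+b) = 2 * sb (a'+b') + 2*(a'+b')" using sb_even[of "a'+b'"] 1 \<open>a' \<ge> 1\<close>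
          by (simp add: distrib_left)
        have e1: "sb a = 2 * sb a' + 2*a'" "sb b = 2 * sb b' + 2*b'" using sb_even \<open>a' \<ge> 1\<close> \<open>b' \<ge> 1\<close> 1 by auto
        have p: "pw a' b' \<Longrightarrow> pw a b" using pw_double'[of a' b' a b] 1 by auto
        show ?thesis using q e0 e1 p 1 unfolding Rs_def by auto
      next
        case 2
        have q1: "Rs (a'+1) b'" using IH[of "a'+1" b'] 2 ab \<open>a' \<ge> 1\<close> \<open>b' \<ge> 1\<close> by auto
        have q2: "Rs a' (b'+1)" using IH[of a' "b'+1"] 2 ab \<open>a' \<ge> 1\<close> \<open>b' \<ge> 1\<close> by auto
        have e0: "sb (a+b) = 2 * sb (a'+b'+1) + 2*(a'+b'+1)" using sb_even[of "a'+b'+1"] 2 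
          by (simp add: distrib_left)
        have e1: "sb a = sb (a'+1) + sb a' + 2*a'+1" "sb b = sb (b'+1) + sb b' + 2*b'+1"
          using sb_odd \<open>a' \<ge> 1\<close> \<open>b' \<ge> 1\<close> 2 by auto
        have p1: "pw (a'+1) b' \<Longrightarrow> pw a b" using pw_double'[of "a'+1" b' a b] 2 by auto
        have p2: "pw a' (b'+1) \<Longrightarrow> pw a b" using pw_double'[of a' "b'+1" a b] 2 by auto
        have s: "a'+1+b' = a'+b'+1" "a'+(b'+1) = a'+b'+1" by simp_all
        show ?thesis using q1 q2 e0 e1 p1 p2 2 unfolding Rs_def s by auto
      next
        case 3
        have q1: "Rs (a'+1) b'" using IH[of "a'+1" b'] 3 ab \<open>a' \<ge> 1\<close> \<open>b' \<ge> 1\<close> by auto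
        have q2: "Rs a' b'" using IH[of a' b'] 3 ab \<open>a' \<ge> 1\<close> \<open>b' \<ge> 1\<close> by auto
        have e0: "sb (a+b) = sb (a'+b'+1) + sb (a'+b') + 2*(a'+b') + 1" using sb_odd[of "a'+b'"] 3 \<open>a' \<ge> 1\<close>
          by (simp add: algebra_simps)
        have e1: "sb a = sb (a'+1) + sb a' + 2*a'+1" "sb b = 2 * sb b' + 2*b'"
          using sb_odd sb_even \<open>a' \<ge> 1\<close> \<open>b' \<ge> 1\<close> 3 by auto
        have p1: "pw (a'+1) b' \<Longrightarrow> pw a b" using pw_double'[of "a'+1" b' a b] 3 by auto
        have p2: "pw a' b' \<Longrightarrow> pw a b" using pw_double'[of a' b' a b] 3 by auto
        have s: "a'+1+b' = a'+b'+1" by simp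
        show ?thesis using q1 q2 e0 e1 p1 p2 3 unfolding Rs_def s by auto
      next
        case 4
        have q1: "Rs a' (b'+1)" using IH[of a' "b'+1"] 4 ab \<open>a' \<ge> 1\<close> \<open>b' \<ge> 1\<close> by auto
        have q2: "Rs a' b'" using IH[of a' b'] 4 ab \<open>a' \<ge> 1\<close> \<open>b' \<ge> 1\<close> by auto
        have e0: "sb (a+b) = sb (a'+b'+1) + sb (a'+b') + 2*(a'+b') + 1" using sb_odd[of "a'+b'"] 4 \<open>a' \<ge> 1\<close>
          by (simp add: algebra_simps)
        have e1: "sb b = sb (b'+1) + sb b' + 2*b'+1" "sb a = 2 * sb a' + 2*a'"
          using sb_odd sb_even \<open>a' \<ge> 1\<close> \<open>b' \<ge> 1\<close> 4 by auto
        have p1: "pw a' (b'+1) \<Longrightarrow> pw a b" using pw_double'[of a' "b'+1" a b] 4 by auto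
        have p2: "pw a' b' \<Longrightarrow> pw a b" using pw_double'[of a' b' a b] 4 by auto
        have s: "a'+(b'+1) = a'+b'+1" by simp
        show ?thesis using q1 q2 e0 e1 p1 p2 4 unfolding Rs_def s by auto
      qed
    qed
  qed
  show ?case
  proof (intro allI impI)
    fix a b assume "a + b = n" "1 \<le> a" "1 \<le> b"
    then show "Rs a b" using ord[of a b] ord[of b a] Rs_sym[of a b] by (cases "a \<le> b") (auto simp: add.commute)
  qed
qed
lemma leaves_pos: "leaves t \<ge> 1" by (induction t) auto

lemma absif: "int (if b \<le> a then a - b else b - a) = \<bar>int a - int b\<bar>" by auto

lemma cb_lower: "cb (leaves t) \<le> colless t"
proof (induction t)
  case Leaf then show ?case using cb1' by simp
next
  case (Node l r)
  have "Qc (leaves l) (leaves r)" using colless_split leaves_pos by blast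
  then have "int (cb (leaves l + leaves r)) \<le> int (cb (leaves l)) + int (cb (leaves r)) + \<bar>int (leaves l) - int (leaves r)\<bar>"
    unfolding Qc_def by blast
  then show ?case using Node absif[of "leaves r" "leaves l"] by simp
qed

lemma sb_lower: "sb (leaves t) \<le> sackin t"
proof (induction t)
  case Leaf then show ?case using cb1' by simp
next
  case (Node l r)
  have "Rs (leaves l) (leaves r)" using sackin_split leaves_pos by blast
  then show ?case using Node unfolding Rs_def by simp
qed

lemma bounds: "colless t \<le> leaves t * leaves t \<and> sackin t \<le> leaves t * leaves t"
proof (induction t)
  case Leaf then show ?case by simp
next
  case (Node l r)
  have "1 \<le> leaves l" "1 \<le> leaves r" using leaves_pos by auto
  then have "leaves l + leaves r \<le> 2 * leaves l * leaves r"
    by (metis add_le_mono mult_2 mult_le_mono2 mult.commute mult_1 mult.assoc mult_le_mono1)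
  then show ?case using Node by (auto simp: algebra_simps)
qed

lemma main: "colless t = cb (leaves t) \<Longrightarrow> sackin t = sb (leaves t)"
proof (induction t)
  case Leaf then show ?case using cb1' by simp
next
  case (Node l r)
  have q: "Qc (leaves l) (leaves r)" using colless_split leaves_pos by blast
  have r: "Rs (leaves l) (leaves r)" using sackin_split leaves_pos by blast
  have cl: "cb (leaves l) \<le> colless l" "cb (leaves r) \<le> colless r" using cb_lower by auto
  have eq: "int (colless (Node l r)) = int (colless l) + int (colless r) + \<bar>int (leaves l) - int (leaves r)\<bar>"
    using absif[of "leaves r" "leaves l"] by simp
  have h: "int (cb (leaves l + leaves r)) = int (colless l) + int (colless r) + \<bar>int (leaves l) - int (leaves r)\<bar>"
    using Node.prems eq by simp
  have "colless l = cb (leaves l)" "colless r = cb (leaves r)"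
       "\<not> pw (leaves l) (leaves r)"
    using q h cl unfolding Qc_def by linarith+
  then show ?case using Node.IH r unfolding Rs_def by simp
qed

lemma bal_in: "n \<ge> 1 \<Longrightarrow> bal n \<in> trees n" by (simp add: trees_def leaves_bal)

lemma min_c: assumes "n \<ge> 1" shows "min_colless n = cb n"
  unfolding min_colless_def
proof (rule Min_eqI)
  show "finite (colless ` trees n)"
    by (rule finite_subset[of _ "{..n*n}"]) (auto simp: trees_def bounds)
  show "\<And>y. y \<in> colless ` trees n \<Longrightarrow> cb n \<le> y" using cb_lower by (auto simp: trees_def)
  show "cb n \<in> colless ` trees n" using bal_in[OF assms] cb_def by auto
qed

lemma min_s: assumes "n \<ge> 1" shows "Min (sackin ` trees n) = sb n"
proof (rule Min_eqI)
  show "finite (sackin ` trees n)"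
    by (rule finite_subset[of _ "{..n*n}"]) (auto simp: trees_def bounds)
  show "\<And>y. y \<in> sackin ` trees n \<Longrightarrow> sb n \<le> y" using sb_lower by (auto simp: trees_def)
  show "sb n \<in> sackin ` trees n" using bal_in[OF assms] sb_def by auto
qed

theorem proposition9:
  fixes n :: nat and T :: btree
  assumes "n \<ge> 1" and "T \<in> trees n" and "colless T = min_colless n"
  shows "sackin T = Min (sackin ` trees n)"
  using main[of T] assms min_c min_s by (simp add: trees_def)
end
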